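(* Let $q$ be an odd prime power and let $f$ be a planar function on $\mathbb F_{q^2}$. Let $\{g_a : a\in\mathbb F_{q^2}\}$ be a family of injections $g_a:\mathbb F_q\to\mathbb F_{q^2}$. Put \[\mathcal U_g:=\{(x,g_x(t)) : x\in\mathbb F_{q^2},\ t\in\mathbb F_q\}\cup\{(\infty)\}.\] If for every $a,b\in\mathbb F_{q^2}$ the number of pairs $(x,t)\in\mathbb F_{q^2}\times\mathbb F_q$ with $f(x+a)-b-g_x(t)=0$ is either $1$ or $q+1$, then $\mathcal U_g$ is a unital in $\Pi(f)$.
   Context: A function $f:\mathbb F_{q^2}\to\mathbb F_{q^2}$ is planar if for every $a\neq 0$ the map $x\mapsto f(x+a)-f(x)$ is a bijection of $\mathbb F_{q^2}$. For planar $f$, the projective plane $\Pi(f)$ has as points the affine points $(x,y)\in\mathbb F_{q^2}\times\mathbb F_{q^2}$ and the points $(a)$ for $a\in\mathbb F_{q^2}\cup\{\infty\}$; its lines are $L_{a,b}=\{(x,f(x+a)-b):x\in\mathbb F_{q^2}\}\cup\{(a)\}$ for $a,b\in\mathbb F_{q^2}$, $N_a=\{(a,y):y\in\mathbb F_{q^2}\}\cup\{(\infty)\}$ for $a\in\mathbb F_{q^2}$, and $L_\infty=\{(a):a\in\mathbb F_{q^2}\cup\{\infty\}\}$; incidence is membership. A unital in $\Pi(f)$ is a set of $q^3+1$ points such that every line of $\Pi(f)$ meets it in exactly $1$ or exactly $q+1$ points. *)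

theory Defs
  imports "HOL-Computational_Algebra.Primes"
begin

text \<open>Points and lines of the projective plane Pi(f) over the field 'a = F_{q^2}.
  Pt_aff x y is the affine point (x,y); Pt_inf (Some a) is the point (a);
  Pt_inf None is the point (infinity).\<close>

datatype 'a pp_point = Pt_aff 'a 'a | Pt_inf "'a option"

datatype 'a pp_line = Ln_L 'a 'a | Ln_N 'a | Ln_inf

definition planar :: "('a::field \<Rightarrow> 'a) \<Rightarrow> bool" where
  "planar f \<longleftrightarrow> (\<forall>a. a \<noteq> 0 \<longrightarrow> bij (\<lambda>x. f (x + a) - f x))"

fun line_pts :: "('a::field \<Rightarrow> 'a) \<Rightarrow> 'a pp_line \<Rightarrow> 'a pp_point set" where
  "line_pts f (Ln_L a b) = {Pt_aff x (f (x + a) - b) | x. True} \<union> {Pt_inf (Some a)}"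
| "line_pts f (Ln_N a) = {Pt_aff a y | y. True} \<union> {Pt_inf None}"
| "line_pts f Ln_inf = {Pt_inf z | z. True}"

definition is_unital :: "nat \<Rightarrow> ('a::field \<Rightarrow> 'a) \<Rightarrow> 'a pp_point set \<Rightarrow> bool" where
  "is_unital q f U \<longleftrightarrow> finite U \<and> card U = q ^ 3 + 1 \<and>
     (\<forall>l. card (U \<inter> line_pts f l) = 1 \<or> card (U \<inter> line_pts f l) = q + 1)"

definition subfield_q :: "nat \<Rightarrow> 'a::field set" where
  "subfield_q q = {x. x ^ q = x}"

definition U_g :: "nat \<Rightarrow> ('a::field \<Rightarrow> 'a \<Rightarrow> 'a) \<Rightarrow> 'a pp_point set" where
  "U_g q g = {Pt_aff x (g x t) | x t. t \<in> subfield_q q} \<union> {Pt_inf None}"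

end

theory Submission
  imports Defs "HOL-Computational_Algebra.Polynomial"
begin

lemma roots_bound:
  fixes c :: "'a::field"
  assumes "n \<ge> 1"
  shows "card {x. x ^ n = c} \<le> n"
proof -
  define p where "p = monom (1::'a) n - [:c:]"
  have cn: "coeff p n = 1" using assms by (cases n) (auto simp: p_def coeff_monom)
  hence "p \<noteq> 0" by auto
  have "degree p \<le> n" unfolding p_def
    by (intro degree_diff_le) (auto simp: degree_monom_le)
  moreover have "{x. x ^ n = c} = {x. poly p x = 0}" by (auto simp: p_def poly_monom)
  ultimately show ?thesis using card_poly_roots_bound[OF \<open>p \<noteq> 0\<close>] by simp
qed

lemma fermat_field:
  fixes x :: "'a::{field,finite}"
  assumes "x \<noteq> 0"
  shows "x ^ (card (UNIV::'a set) - 1) = 1"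
proof -
  let ?N = "UNIV - {0::'a}"
  have inj: "inj_on (\<lambda>y. x * y) ?N" using assms by (auto simp: inj_on_def)
  have img: "(\<lambda>y. x * y) ` ?N = ?N"
  proof
    show "(\<lambda>y. x * y) ` ?N \<subseteq> ?N" using assms by auto
    show "?N \<subseteq> (\<lambda>y. x * y) ` ?N"
    proof
      fix z assume "z \<in> ?N"
      hence "z = x * (z / x)" "z / x \<in> ?N" using assms by auto
      thus "z \<in> (\<lambda>y. x * y) ` ?N" by blast
    qed
  qed
  have "prod (\<lambda>y. y) ?N = prod (\<lambda>y. y) ((\<lambda>y. x * y) ` ?N)" using img by simp
  also have "\<dots> = prod (\<lambda>y. x * y) ?N" using prod.reindex[OF inj] by simp
  also have "\<dots> = x ^ card ?N * prod (\<lambda>y. y) ?N" by (simp add: prod.distrib)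
  finally have "x ^ card ?N * prod (\<lambda>y. y) ?N = 1 * prod (\<lambda>y. y) ?N" by simp
  moreover have "prod (\<lambda>y. y) ?N \<noteq> 0" by (simp add: prod_zero_iff)
  ultimately have "x ^ card ?N = 1" by simp
  moreover have "card ?N = card (UNIV::'a set) - 1" by (simp add: card_Diff_singleton)
  ultimately show ?thesis by simp
qed

lemma card_subfield:
  assumes "card (UNIV :: 'a::{field,finite} set) = q ^ 2" and "q \<ge> 2"
  shows "card (subfield_q q :: 'a set) = q"
proof -
  define K where "K = {x::'a. x ^ (q - 1) = 1}"
  define H where "H = {x::'a. x ^ (q + 1) = 1}"
  have K0: "0 \<notin> K" using assms(2) by (auto simp: K_def power_0_left)
  have qs: "q = Suc (q - 1)" using assms(2) by simp
  have S: "(subfield_q q :: 'a set) = insert 0 K"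
  proof (rule set_eqI)
    fix x :: 'a
    have "x ^ q = x \<longleftrightarrow> x * x ^ (q - 1) = x * 1" by (subst qs) simp
    also have "\<dots> \<longleftrightarrow> x = 0 \<or> x ^ (q - 1) = 1" by simp
    finally show "x \<in> subfield_q q \<longleftrightarrow> x \<in> insert 0 K" by (simp add: subfield_q_def K_def)
  qed
  have Kle: "card K \<le> q - 1" unfolding K_def by (rule roots_bound) (use assms in auto)
  have Hle: "card H \<le> q + 1" unfolding H_def by (rule roots_bound) auto
  have cover: "UNIV - {0::'a} \<subseteq> (\<Union>y\<in>H. {x. x \<noteq> 0 \<and> x ^ (q - 1) = y})"
  proof
    fix x :: 'a assume x: "x \<in> UNIV - {0}"
    have "(x ^ (q - 1)) ^ (q + 1) = x ^ (q ^ 2 - 1)"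
    proof -
      have e: "(q - 1) * (q + 1) = q ^ 2 - 1"
        by (cases q) (auto simp: power2_eq_square algebra_simps)
      show ?thesis by (simp only: power_mult[symmetric] e)
    qed
    also have "\<dots> = 1" using fermat_field[of x] x assms(1) by simp
    finally show "x \<in> (\<Union>y\<in>H. {x. x \<noteq> 0 \<and> x ^ (q - 1) = y})" using x by (auto simp: H_def)
  qed
  have fib: "card {x::'a. x \<noteq> 0 \<and> x ^ (q - 1) = y} \<le> card K" for y
  proof (cases "\<exists>x0. x0 \<noteq> 0 \<and> x0 ^ (q - 1) = y")
    case False hence "{x::'a. x \<noteq> 0 \<and> x ^ (q - 1) = y} = {}" by blast
    thus ?thesis by (metis card.empty zero_le)
  next
    case True
    then obtain x0 :: 'a where x0: "x0 \<noteq> 0" "x0 ^ (q - 1) = y" by blast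
    have "inj_on (\<lambda>x. x / x0) {x. x \<noteq> 0 \<and> x ^ (q - 1) = y}" using x0 by (auto simp: inj_on_def)
    moreover have "(\<lambda>x. x / x0) ` {x. x \<noteq> 0 \<and> x ^ (q - 1) = y} \<subseteq> K"
      using x0 by (auto simp: K_def power_divide)
    ultimately show ?thesis by (metis card_inj_on_le finite)
  qed
  have "q ^ 2 - 1 = card (UNIV - {0::'a})" using assms(1) by (simp add: card_Diff_singleton)
  also have "\<dots> \<le> card (\<Union>y\<in>H. {x::'a. x \<noteq> 0 \<and> x ^ (q - 1) = y})" by (rule card_mono[OF _ cover]) auto
  also have "\<dots> \<le> (\<Sum>y\<in>H. card {x::'a. x \<noteq> 0 \<and> x ^ (q - 1) = y})" by (rule card_UN_le) auto
  also have "\<dots> \<le> (\<Sum>y\<in>H. card K)" by (rule sum_mono) (rule fib)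
  also have "\<dots> = card H * card K" by simp
  also have "\<dots> \<le> (q + 1) * card K" using Hle by (rule mult_right_mono) simp_all
  finally have "(q + 1) * (q - 1) \<le> (q + 1) * card K"
    by (cases q) (auto simp: power2_eq_square algebra_simps)
  hence "q - 1 \<le> card K" by (metis mult_le_cancel1 add_gr_0 less_numeral_extra(1) not_less)
  hence "card K = q - 1" using Kle by simp
  thus ?thesis using S K0 assms(2) by simp
qed


theorem lemma2p1:
  fixes q :: nat and p k :: nat
    and f :: "'a::{field,finite} \<Rightarrow> 'a"
    and g :: "'a \<Rightarrow> 'a \<Rightarrow> 'a"
  assumes "prime p" and "odd p" and "k \<ge> 1" and "q = p ^ k"
    and "card (UNIV :: 'a set) = q ^ 2"
    and "planar f"
    and "\<forall>a. inj_on (g a) (subfield_q q)"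
    and "\<forall>a b. card {(x, t). t \<in> subfield_q q \<and> f (x + a) - b - g x t = 0} = 1
             \<or> card {(x, t). t \<in> subfield_q q \<and> f (x + a) - b - g x t = 0} = q + 1"
  shows "is_unital q f (U_g q g)"
proof -
  define S where "S = (subfield_q q :: 'a set)"
  have p2: "p \<ge> 2" using assms(1) prime_ge_2_nat by blast
  have "p \<le> p ^ k" using assms(3) p2 by (simp add: self_le_power)
  hence q2: "q \<ge> 2" using p2 assms(4) by simp
  have cS: "card S = q" unfolding S_def by (rule card_subfield[OF assms(5) q2])
  have injg: "inj_on (g a) S" for a using assms(7) S_def by simp
  define F where "F = (\<lambda>(x, t). Pt_aff x (g x t) :: 'a pp_point)"
  have injF: "inj_on F (UNIV \<times> S)"
    using injg by (auto simp: F_def inj_on_def)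
  have A: "{Pt_aff x (g x t) | x t. t \<in> subfield_q q} = F ` (UNIV \<times> S)"
    by (auto simp: F_def S_def)
  have U: "U_g q g = F ` (UNIV \<times> S) \<union> {Pt_inf None}"
    unfolding U_g_def A ..
  have fin: "finite (U_g q g)" unfolding U by simp
  have cA: "card (F ` (UNIV \<times> S)) = q ^ 3"
    using card_image[OF injF] cS assms(5) by (simp add: card_cartesian_product power_numeral_reduce)
  have cU: "card (U_g q g) = q ^ 3 + 1"
  proof -
    have "Pt_inf None \<notin> F ` (UNIV \<times> S)" by (auto simp: F_def)
    hence "card (insert (Pt_inf None) (F ` (UNIV \<times> S))) = card (F ` (UNIV \<times> S)) + 1"
      by (simp add: card_insert_if)
    thus ?thesis unfolding U using cA by simp
  qed
  have lines: "card (U_g q g \<inter> line_pts f l) = 1 \<or> card (U_g q g \<inter> line_pts f l) = q + 1" for l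
  proof (cases l)
    case (Ln_L a b)
    define P where "P = {(x, t). t \<in> subfield_q q \<and> f (x + a) - b - g x t = 0}"
    have "U_g q g \<inter> line_pts f l = F ` P"
      unfolding U Ln_L by (auto simp: F_def P_def S_def)
    moreover have "inj_on F P" using injF by (rule inj_on_subset) (auto simp: P_def S_def)
    ultimately have "card (U_g q g \<inter> line_pts f l) = card P" by (simp add: card_image)
    moreover have "card P = 1 \<or> card P = q + 1" using assms(8) unfolding P_def by blast
    ultimately show ?thesis by simp
  next
    case (Ln_N a)
    have "U_g q g \<inter> line_pts f l = (\<lambda>t. Pt_aff a (g a t)) ` S \<union> {Pt_inf None}"
      unfolding U Ln_N by (auto simp: F_def)
    moreover have "card ((\<lambda>t. Pt_aff a (g a t)) ` S) = q"
      using injg[of a] cS by (simp add: card_image inj_on_def)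
    moreover have "Pt_inf None \<notin> (\<lambda>t. Pt_aff a (g a t)) ` S" by auto
    ultimately have "card (U_g q g \<inter> line_pts f l) = q + 1" by (simp add: card_insert_if)
    thus ?thesis by simp
  next
    case Ln_inf
    have "U_g q g \<inter> line_pts f l = {Pt_inf None}" unfolding U Ln_inf by (auto simp: F_def)
    thus ?thesis by simp
  qed
  show ?thesis unfolding is_unital_def using fin cU lines by blast
qed

end
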